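(* Let $\theta\in(0,\pi)$ and let $\mathcal{B}_\theta$ be the moduli space of spherical bigons of angle $\theta$ with labeled sides. For $i=1,2$ let $r_i$ be the radius of the disk $D_i\subset\mathbb{S}^2$ whose boundary contains side $i$, $k_i=\cot r_i$ the geodesic curvature of side $i$, $K_i=\log k_i$, $\ell_i$ the length of side $i$, and $T_i=\ell_ik_i$ its total geodesic curvature. Then the $1$-form $\omega_\theta:=\ell_1\,\mathrm{d}k_1+\ell_2\,\mathrm{d}k_2=T_1\,\mathrm{d}K_1+T_2\,\mathrm{d}K_2$ on $\mathcal{B}_\theta$ is closed.
   Context: A spherical bigon is the intersection $D_1\cap D_2$ of two open round disks in $\mathbb{S}^2$ of radii less than $\frac{\pi}{2}$, neither containing the other, with angle the interior angle at its corners; $\mathcal{B}_\theta$ consists of such bigons of angle $\theta$ with the two sides labeled $1,2$, up to label-preserving isometry. The map $(r_1,r_2)$ is a bijection $\mathcal{B}_\theta\to(0,\frac{\pi}{2})^2$, so $(k_1,k_2)$ and $(K_1,K_2)$ give smooth parametrizations of $\mathcal{B}_\theta$ by $\mathbb{R}_+^2$ and $\mathbb{R}^2$ respectively. *)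

theory Defs
  imports "HOL-Analysis.Analysis"
begin

text \<open>
  Spherical bigon D1 \<inter> D2 on the unit sphere, disks of radii r1, r2 in (0, pi/2),
  interior angle theta at the two corners.  Let c1, c2 be the centres and P a corner.
  In the spherical triangle (c1, c2, P) the sides at P are r1 (to c1) and r2 (to c2), and
  the angle at P between the two radii is pi - theta (the radii are normal to the
  boundary circles).  Side 1 is the arc of the boundary circle of D1 lying in the
  closure of D2; it subtends at c1 the angle 2*beta1, where beta1 in (0, pi) is the angle
  of the triangle at c1.  By the four-part cotangent formula
     cot beta1 = (sin r1 * cot r2 + cos r1 * cos theta) / sin theta,
  and the (spherical) length of side 1 is  sin r1 * 2 * beta1.
  Here arccot u = pi/2 - arctan u, with values in (0, pi).
\<close>

definition center_angle :: "real \<Rightarrow> real \<Rightarrow> real \<Rightarrow> real" where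
  "center_angle \<theta> r1 r2 =
     pi / 2 - arctan ((sin r1 * cot r2 + cos r1 * cos \<theta>) / sin \<theta>)"

definition side_length :: "real \<Rightarrow> real \<Rightarrow> real \<Rightarrow> real" where
  "side_length \<theta> r1 r2 = 2 * sin r1 * center_angle \<theta> r1 r2"

text \<open>radius r in (0, pi/2) with geodesic curvature k = cot r > 0\<close>
definition radius_of_curv :: "real \<Rightarrow> real" where
  "radius_of_curv k = arctan (1 / k)"

text \<open>side lengths l1, l2 as functions on B_theta in the coordinates (k1, k2) in R_+^2\<close>
definition ell1 :: "real \<Rightarrow> real \<times> real \<Rightarrow> real" where
  "ell1 \<theta> k = side_length \<theta> (radius_of_curv (fst k)) (radius_of_curv (snd k))"

definition ell2 :: "real \<Rightarrow> real \<times> real \<Rightarrow> real" where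
  "ell2 \<theta> k = side_length \<theta> (radius_of_curv (snd k)) (radius_of_curv (fst k))"

text \<open>total geodesic curvatures T_i = l_i k_i in the coordinates (K1, K2) = (log k1, log k2)
  in R^2\<close>
definition T1 :: "real \<Rightarrow> real \<times> real \<Rightarrow> real" where
  "T1 \<theta> K = ell1 \<theta> (exp (fst K), exp (snd K)) * exp (fst K)"

definition T2 :: "real \<Rightarrow> real \<times> real \<Rightarrow> real" where
  "T2 \<theta> K = ell2 \<theta> (exp (fst K), exp (snd K)) * exp (snd K)"

text \<open>The 1-form  P dx + Q dy  on an open set U of R^2 is closed:
  P, Q are differentiable and  dP/dy = dQ/dx  at every point of U.\<close>
definition closed_1form2 ::
  "(real \<times> real \<Rightarrow> real) \<Rightarrow> (real \<times> real \<Rightarrow> real) \<Rightarrow> (real \<times> real) set \<Rightarrow> bool" where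
  "closed_1form2 P Q U \<longleftrightarrow> open U \<and>
     (\<forall>z\<in>U. P differentiable (at z) \<and> Q differentiable (at z) \<and>
        (\<exists>a b. ((\<lambda>t. P (fst z, t)) has_real_derivative a) (at (snd z)) \<and>
               ((\<lambda>s. Q (s, snd z)) has_real_derivative b) (at (fst z)) \<and> a = b))"

end

theory Submission imports Defs begin

lemma one_plus_sq_ne [simp]: "1 + (x::real)^2 \<noteq> 0"
  by (smt (verit) zero_le_power2)
lemma one_plus_sq_gt [simp]: "0 < 1 + (x::real)^2"
  by (smt (verit) zero_le_power2)

definition F :: "real \<Rightarrow> real \<Rightarrow> real \<Rightarrow> real" where
  "F \<theta> a b = 2 / sqrt (1 + a^2) * (pi/2 - arctan ((b + a * cos \<theta>) / (sin \<theta> * sqrt (1 + a^2))))"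

lemma F_eq:
  assumes "0 < a" "0 < b"
  shows "side_length \<theta> (radius_of_curv a) (radius_of_curv b) = F \<theta> a b"
proof -
  have s: "sqrt (1 + (1/a)^2) = sqrt (1 + a^2) / a"
  proof -
    have "1 + (1/a)^2 = (1 + a^2) / a^2" using assms by (simp add: field_simps)
    then show ?thesis using assms by (simp add: real_sqrt_divide)
  qed
  have p: "sqrt (1 + a^2) > 0" by (simp add: add_pos_nonneg)
  have sa: "sin (arctan (1/a)) = 1 / sqrt (1 + a^2)" unfolding sin_arctan s using assms p by simp
  have ca: "cos (arctan (1/a)) = a / sqrt (1 + a^2)" unfolding cos_arctan s using assms p by simp
  have cb: "cot (arctan (1/b)) = b"
    using assms by (simp add: cot_def sin_arctan cos_arctan)
  show ?thesis unfolding side_length_def center_angle_def radius_of_curv_def F_def sa ca cb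
    by (simp add: field_simps)
qed

lemma F_diff: "0 < sin \<theta> \<Longrightarrow> (\<lambda>z. F \<theta> (fst z) (snd z)) differentiable (at z)"
  unfolding F_def differentiable_def
  apply (rule exI)
  apply (rule derivative_intros | (simp; fail))+
  done

lemma alg0:
  fixes u v P W X :: real
  assumes "u > 0" "v > 0" "P > 0"
  shows "0 * X + (0 - inverse (P / (u * v) ^ 2) *
     (((1 + 0) * (u * v) - W * 0) / (u * v * (u * v)))) * (2 / v) = - 2 * u / P"
  using assms by (simp add: field_simps power2_eq_square)

lemma alg:
  fixes u v a b c X :: real
  assumes "u > 0" "v > 0" "v ^ 2 = 1 + a ^ 2" "u ^ 2 + c ^ 2 = 1"
  shows "0 * X + (0 - inverse (1 + ((b + a * c) / (u * v)) ^ 2) *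
     (((1 + 0) * (u * v) - (b + a * c) * 0) / (u * v * (u * v)))) * (2 / v)
     = - 2 * u / (u ^ 2 + a ^ 2 + b ^ 2 + 2 * c * a * b)"
proof -
  have D: "u ^ 2 + a ^ 2 + b ^ 2 + 2 * c * a * b = u ^ 2 * v ^ 2 + (b + a * c) ^ 2"
  proof -
    have "u ^ 2 * v ^ 2 + (b + a * c) ^ 2 = u ^ 2 + a ^ 2 * (u ^ 2 + c ^ 2) + b ^ 2 + 2 * c * a * b"
      by (simp only: assms(3)) (simp add: algebra_simps power2_eq_square)
    then show ?thesis using assms(4) by simp
  qed
  have Dp: "u ^ 2 * v ^ 2 + (b + a * c) ^ 2 > 0" using assms by (simp add: add_pos_nonneg)
  have "1 + ((b + a * c) / (u * v)) ^ 2 = (u ^ 2 * v ^ 2 + (b + a * c) ^ 2) / (u * v) ^ 2"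
  proof -
    have y: "u * v \<noteq> 0" using assms by simp
    have "1 + ((b + a * c) / (u * v)) ^ 2 = ((u * v) ^ 2 + (b + a * c) ^ 2) / (u * v) ^ 2"
      using y by (simp add: power_divide field_simps)
    then show ?thesis by (simp add: power_mult_distrib)
  qed
  then show ?thesis unfolding D using alg0[OF assms(1,2) Dp] by simp
qed

lemma F_deriv:
  assumes "0 < sin \<theta>"
  shows "((\<lambda>t. F \<theta> a t) has_real_derivative
     (- 2 * sin \<theta> / ((sin \<theta>)^2 + a^2 + b^2 + 2 * cos \<theta> * a * b))) (at b)"
proof -
  have p: "sqrt (1 + a^2) > 0" by simp
  show ?thesis unfolding F_def
    apply (rule derivative_eq_intros refl)+
    using assms p apply simp
    apply (rule refl)+
    by (rule alg[OF assms p _ sin_cos_squared_add]) simp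
qed

lemma G_diff: "0 < sin \<theta> \<Longrightarrow>
  (\<lambda>z. F \<theta> (exp (fst z)) (exp (snd z)) * exp (fst z)) differentiable (at z)"
  unfolding F_def differentiable_def
  apply (rule exI)
  apply (rule derivative_intros | (simp; fail))+
  done

lemma diff_transform_open:
  assumes "f differentiable (at x)" "open S" "x \<in> S" "\<And>y. y \<in> S \<Longrightarrow> f y = g y"
  shows "g differentiable (at x)"
  using assms has_derivative_transform_within_open unfolding differentiable_def by metis

lemma Dsym: "(s::real)^2 + a^2 + b^2 + 2 * c * a * b = s^2 + b^2 + a^2 + 2 * c * b * a"
  by (simp add: algebra_simps)

theorem lemma3p2:
  fixes \<theta> :: real
  assumes "0 < \<theta>" and "\<theta> < pi"
  shows "closed_1form2 (ell1 \<theta>) (ell2 \<theta>) {k. 0 < fst k \<and> 0 < snd k}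
       \<and> closed_1form2 (T1 \<theta>) (T2 \<theta>) UNIV"
proof
  have sp: "0 < sin \<theta>" using assms by (simp add: sin_gt_zero)
  have sn: "sin \<theta> \<noteq> 0" using sp by simp
  define U where "U = {k::real\<times>real. 0 < fst k \<and> 0 < snd k}"
  have oU: "open U" unfolding U_def
    by (intro open_Collect_conj open_Collect_less continuous_intros)
  have e1: "ell1 \<theta> k = F \<theta> (fst k) (snd k)" if "k \<in> U" for k
    using that unfolding U_def ell1_def by (simp add: F_eq)
  have e2: "ell2 \<theta> k = F \<theta> (snd k) (fst k)" if "k \<in> U" for k
    using that unfolding U_def ell2_def by (simp add: F_eq)
  have d2: "(\<lambda>z. F \<theta> (snd z) (fst z)) differentiable (at z)" for z
    unfolding F_def differentiable_def
    apply (rule exI)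
    apply (rule derivative_intros | (simp add: sp sn; fail))+
    done
  show "closed_1form2 (ell1 \<theta>) (ell2 \<theta>) {k. 0 < fst k \<and> 0 < snd k}"
    unfolding closed_1form2_def U_def[symmetric]
  proof (intro conjI ballI oU)
    fix z assume z: "z \<in> U"
    show "ell1 \<theta> differentiable (at z)"
      by (rule diff_transform_open[OF F_diff[OF sp] oU z]) (simp add: e1)
    show "ell2 \<theta> differentiable (at z)"
      by (rule diff_transform_open[OF d2 oU z]) (simp add: e2)
    have zp: "0 < fst z" "0 < snd z" using z unfolding U_def by auto
    have A: "((\<lambda>t. ell1 \<theta> (fst z, t)) has_real_derivative
        (- 2 * sin \<theta> / ((sin \<theta>)^2 + (fst z)^2 + (snd z)^2 + 2 * cos \<theta> * fst z * snd z))) (at (snd z))"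
      by (rule has_field_derivative_transform_within_open[OF F_deriv[OF sp], of "{0<..}"])
        (use zp in \<open>auto simp: e1 U_def\<close>)
    have B: "((\<lambda>s. ell2 \<theta> (s, snd z)) has_real_derivative
        (- 2 * sin \<theta> / ((sin \<theta>)^2 + (snd z)^2 + (fst z)^2 + 2 * cos \<theta> * snd z * fst z))) (at (fst z))"
      by (rule has_field_derivative_transform_within_open[OF F_deriv[OF sp], of "{0<..}"])
        (use zp in \<open>auto simp: e2 U_def\<close>)
    show "\<exists>a b. ((\<lambda>t. ell1 \<theta> (fst z, t)) has_real_derivative a) (at (snd z)) \<and>
               ((\<lambda>s. ell2 \<theta> (s, snd z)) has_real_derivative b) (at (fst z)) \<and> a = b"
      using A B by (intro exI conjI) (auto simp: Dsym)
  qed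
  have t1: "T1 \<theta> = (\<lambda>z. F \<theta> (exp (fst z)) (exp (snd z)) * exp (fst z))"
    by (rule ext) (simp add: T1_def ell1_def F_eq)
  have t2: "T2 \<theta> = (\<lambda>z. F \<theta> (exp (snd z)) (exp (fst z)) * exp (snd z))"
    by (rule ext) (simp add: T2_def ell2_def F_eq)
  show "closed_1form2 (T1 \<theta>) (T2 \<theta>) UNIV"
    unfolding closed_1form2_def
  proof (intro conjI ballI open_UNIV)
    fix z :: "real \<times> real"
    show "T1 \<theta> differentiable (at z)" unfolding t1 by (rule G_diff[OF sp])
    show "T2 \<theta> differentiable (at z)" unfolding t2 F_def differentiable_def
      apply (rule exI)
      apply (rule derivative_intros | (simp add: sp sn; fail))+
      done
    have A: "((\<lambda>t. T1 \<theta> (fst z, t)) has_real_derivative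
        (- 2 * sin \<theta> / ((sin \<theta>)^2 + (exp (fst z))^2 + (exp (snd z))^2 + 2 * cos \<theta> * exp (fst z) * exp (snd z)))
          * exp (snd z) * exp (fst z)) (at (snd z))"
      unfolding t1 fst_conv snd_conv
      by (intro DERIV_cmult_right DERIV_chain2[where g=exp, OF F_deriv[OF sp, of "exp (fst z)" "exp (snd z)"]] DERIV_exp)
    have B: "((\<lambda>s. T2 \<theta> (s, snd z)) has_real_derivative
        (- 2 * sin \<theta> / ((sin \<theta>)^2 + (exp (snd z))^2 + (exp (fst z))^2 + 2 * cos \<theta> * exp (snd z) * exp (fst z)))
          * exp (fst z) * exp (snd z)) (at (fst z))"
      unfolding t2 fst_conv snd_conv
      by (intro DERIV_cmult_right DERIV_chain2[where g=exp, OF F_deriv[OF sp, of "exp (snd z)" "exp (fst z)"]] DERIV_exp)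
    show "\<exists>a b. ((\<lambda>t. T1 \<theta> (fst z, t)) has_real_derivative a) (at (snd z)) \<and>
               ((\<lambda>s. T2 \<theta> (s, snd z)) has_real_derivative b) (at (fst z)) \<and> a = b"
    proof -
      have eq: "- 2 * sin \<theta> / ((sin \<theta>)^2 + (exp (fst z))^2 + (exp (snd z))^2 + 2 * cos \<theta> * exp (fst z) * exp (snd z)) * exp (snd z) * exp (fst z)
        = - 2 * sin \<theta> / ((sin \<theta>)^2 + (exp (snd z))^2 + (exp (fst z))^2 + 2 * cos \<theta> * exp (snd z) * exp (fst z)) * exp (fst z) * exp (snd z)"
        by (simp add: algebra_simps)
      show ?thesis using A B unfolding eq by blast
    qed
  qed
qed

end
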